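(* Let $X$ be a topological space and $\mathcal A,\mathcal B\subseteq\wp(X)$. Then the games $G_1(\Omega_{C_{\mathcal A}(X),\mathbf 0},\Omega_{C_{\mathcal B}(X),\mathbf 0})$ and $G_1(\mathscr N_{C_{\mathcal A}(X)}(\mathbf 0),\neg\Omega_{C_{\mathcal B}(X),\mathbf 0})$ are dual.
   Context: $C_{\mathcal A}(X)$ is the set of continuous $f:X\to\mathbb R$ with the topology generated by the sets $[f;A,\varepsilon]=\{g:\sup_{x\in A}|f(x)-g(x)|<\varepsilon\}$, $A\in\mathcal A$, $\varepsilon>0$; similarly $C_{\mathcal B}(X)$ (same underlying set). $\mathbf 0$ is the zero function. For a space $Y$ and $y\in Y$, $\Omega_{Y,y}=\{S\subseteq Y:y\in\mathrm{cl}_Y(S)\}$ and $\mathscr N_Y(y)$ is the set of open neighbourhoods of $y$. In $G_1(\mathcal E,\mathcal C)$, at each inning $n\in\omega$ One plays $E_n\in\mathcal E$ and Two picks $x_n\in E_n$; Two wins iff $\{x_n:n\in\omega\}\in\mathcal C$; $\neg\mathcal C$ is the complement of $\mathcal C$. A strategy for One maps finite sequences of Two's moves to moves; predetermined if it depends only on the inning number. A strategy for Two maps finite sequences of One's moves to an element of the last one; Markov if it depends only on One's last move and the inning number. $G,H$ are dual if: One has a winning strategy in $G$ iff Two has one in $H$; One has one in $H$ iff Two has one in $G$; One has a winning predetermined strategy in $G$ iff Two has a winning Markov strategy in $H$; One has a winning predetermined strategy in $H$ iff Two has a winning Markov strategy in $G$. *)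

theory Defs
  imports "HOL-Analysis.Analysis"
begin

text \<open>Continuous real functions on X, represented extensionally (value 0 off topspace X).\<close>
definition Cfun :: "'x topology \<Rightarrow> ('x \<Rightarrow> real) set" where
  "Cfun X = {f. continuous_map X euclideanreal f \<and> (\<forall>x. x \<notin> topspace X \<longrightarrow> f x = 0)}"

text \<open>[f;A,eps] = {g. sup over A of |f - g| < eps}.\<close>
definition bracket :: "'x topology \<Rightarrow> ('x \<Rightarrow> real) \<Rightarrow> 'x set \<Rightarrow> real \<Rightarrow> ('x \<Rightarrow> real) set" where
  "bracket X f A \<epsilon> = {g \<in> Cfun X. \<exists>\<delta>. \<delta> < \<epsilon> \<and> (\<forall>x\<in>A. \<bar>f x - g x\<bar> \<le> \<delta>)}"

text \<open>C_A(X): the topology on Cfun X generated (as a subbase) by the sets [f;A,eps].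
  The whole carrier is added so that the topspace is Cfun X even when the family is empty.\<close>
definition C_top :: "'x topology \<Rightarrow> 'x set set \<Rightarrow> ('x \<Rightarrow> real) topology" where
  "C_top X \<A> = topology_generated_by
     (insert (Cfun X) {bracket X f A \<epsilon> | f A \<epsilon>. f \<in> Cfun X \<and> A \<in> \<A> \<and> \<epsilon> > 0})"

definition Omega :: "'b topology \<Rightarrow> 'b \<Rightarrow> 'b set set" where
  "Omega Y y = {S. S \<subseteq> topspace Y \<and> y \<in> Y closure_of S}"

definition Nbhds :: "'b topology \<Rightarrow> 'b \<Rightarrow> 'b set set" where
  "Nbhds Y y = {U. openin Y U \<and> y \<in> U}"

text \<open>A game G_1(E,C) is represented by the pair (E, C).\<close>

definition one_wins :: "'b set set \<times> 'b set set \<Rightarrow> ('b list \<Rightarrow> 'b set) \<Rightarrow> bool" where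
  "one_wins G \<sigma> \<longleftrightarrow> (\<forall>s. \<sigma> s \<in> fst G) \<and>
     (\<forall>x::nat \<Rightarrow> 'b. (\<forall>n. x n \<in> \<sigma> (map x [0..<n])) \<longrightarrow> range x \<notin> snd G)"

definition one_has_ws :: "'b set set \<times> 'b set set \<Rightarrow> bool" where
  "one_has_ws G \<longleftrightarrow> (\<exists>\<sigma>. one_wins G \<sigma>)"

definition one_has_ws_pre :: "'b set set \<times> 'b set set \<Rightarrow> bool" where
  "one_has_ws_pre G \<longleftrightarrow> (\<exists>E::nat \<Rightarrow> 'b set. (\<forall>n. E n \<in> fst G) \<and>
     (\<forall>x::nat \<Rightarrow> 'b. (\<forall>n. x n \<in> E n) \<longrightarrow> range x \<notin> snd G))"

definition two_wins :: "'b set set \<times> 'b set set \<Rightarrow> ('b set list \<Rightarrow> 'b) \<Rightarrow> bool" where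
  "two_wins G \<tau> \<longleftrightarrow> (\<forall>s. s \<noteq> [] \<and> set s \<subseteq> fst G \<longrightarrow> \<tau> s \<in> last s) \<and>
     (\<forall>E::nat \<Rightarrow> 'b set. (\<forall>n. E n \<in> fst G) \<longrightarrow>
        range (\<lambda>n. \<tau> (map E [0..<Suc n])) \<in> snd G)"

definition two_has_ws :: "'b set set \<times> 'b set set \<Rightarrow> bool" where
  "two_has_ws G \<longleftrightarrow> (\<exists>\<tau>. two_wins G \<tau>)"

definition two_has_ws_markov :: "'b set set \<times> 'b set set \<Rightarrow> bool" where
  "two_has_ws_markov G \<longleftrightarrow> (\<exists>\<tau>::nat \<Rightarrow> 'b set \<Rightarrow> 'b.
     (\<forall>n E. E \<in> fst G \<longrightarrow> \<tau> n E \<in> E) \<and>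
     (\<forall>E::nat \<Rightarrow> 'b set. (\<forall>n. E n \<in> fst G) \<longrightarrow> range (\<lambda>n. \<tau> n (E n)) \<in> snd G))"

definition dual_games :: "'b set set \<times> 'b set set \<Rightarrow> 'b set set \<times> 'b set set \<Rightarrow> bool" where
  "dual_games G H \<longleftrightarrow>
     (one_has_ws G \<longleftrightarrow> two_has_ws H) \<and>
     (one_has_ws H \<longleftrightarrow> two_has_ws G) \<and>
     (one_has_ws_pre G \<longleftrightarrow> two_has_ws_markov H) \<and>
     (one_has_ws_pre H \<longleftrightarrow> two_has_ws_markov G)"

end

theory Submission
  imports Defs
begin

lemma omega_iff:
  "S \<in> Omega Y y \<longleftrightarrow> S \<subseteq> topspace Y \<and> y \<in> topspace Y \<and> (\<forall>U\<in>Nbhds Y y. S \<inter> U \<noteq> {})"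
  unfolding Omega_def Nbhds_def in_closure_of by blast

lemma nbhd_sub: "U \<in> Nbhds Y y \<Longrightarrow> U \<subseteq> topspace Y"
  unfolding Nbhds_def by (simp add: openin_subset)

lemma top_nbhd: "y \<in> topspace Y \<Longrightarrow> topspace Y \<in> Nbhds Y y"
  unfolding Nbhds_def by simp

lemma top_omega: "y \<in> topspace Y \<Longrightarrow> topspace Y \<in> Omega Y y"
  unfolding Omega_def by simp

lemma big_nbhd:
  assumes y: "y \<in> topspace Y" and f: "\<forall>A\<in>Omega Y y. f A \<in> A"
  shows "\<exists>U\<in>Nbhds Y y. \<forall>x\<in>U. \<exists>A\<in>Omega Y y. f A = x"
proof (rule ccontr)
  assume "\<not> ?thesis"
  then have "\<forall>U. \<exists>x. U \<in> Nbhds Y y \<longrightarrow> x \<in> U \<and> (\<forall>A\<in>Omega Y y. f A \<noteq> x)" by blast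
  then have "\<exists>g. \<forall>U. U \<in> Nbhds Y y \<longrightarrow> g U \<in> U \<and> (\<forall>A\<in>Omega Y y. f A \<noteq> g U)" by (rule choice)
  then obtain g where g: "\<And>U. U \<in> Nbhds Y y \<Longrightarrow> g U \<in> U \<and> (\<forall>A\<in>Omega Y y. f A \<noteq> g U)"
    by blast
  let ?A = "g ` Nbhds Y y"
  have s1: "?A \<subseteq> topspace Y"
  proof
    fix z assume "z \<in> ?A"
    then obtain U where "U \<in> Nbhds Y y" "z = g U" by blast
    then show "z \<in> topspace Y" using g[of U] nbhd_sub[of U Y y] by auto
  qed
  have s2: "\<forall>U\<in>Nbhds Y y. ?A \<inter> U \<noteq> {}"
  proof
    fix U assume "U \<in> Nbhds Y y"
    then have "g U \<in> ?A \<inter> U" using g[of U] by auto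
    then show "?A \<inter> U \<noteq> {}" by blast
  qed
  have "?A \<in> Omega Y y"
    unfolding omega_iff using s1 s2 y by blast
  then have "f ?A \<in> ?A" using f by blast
  then obtain U where "U \<in> Nbhds Y y" "f ?A = g U" by blast
  then show False using g[of U] \<open>?A \<in> Omega Y y\<close> by auto
qed

lemma small_omega:
  assumes y: "y \<in> topspace Y" and f: "\<forall>U\<in>Nbhds Y y. f U \<in> U"
  shows "f ` Nbhds Y y \<in> Omega Y y"
proof -
  have s1: "f ` Nbhds Y y \<subseteq> topspace Y"
  proof
    fix z assume "z \<in> f ` Nbhds Y y"
    then obtain U where "U \<in> Nbhds Y y" "z = f U" by blast
    then show "z \<in> topspace Y" using f nbhd_sub[of U Y y] by auto
  qed
  have s2: "\<forall>U\<in>Nbhds Y y. f ` Nbhds Y y \<inter> U \<noteq> {}"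
  proof
    fix U assume "U \<in> Nbhds Y y"
    then have "f U \<in> f ` Nbhds Y y \<inter> U" using f by blast
    then show "f ` Nbhds Y y \<inter> U \<noteq> {}" by blast
  qed
  show ?thesis unfolding omega_iff using s1 s2 y by blast
qed

primrec hr :: "('b list \<Rightarrow> 'b set) \<Rightarrow> 'b set list \<Rightarrow> 'b list" where
  "hr \<sigma> [] = []"
| "hr \<sigma> (A#r) = hr \<sigma> r @ [SOME x. x \<in> \<sigma> (hr \<sigma> r) \<inter> A]"

lemma follow:
  assumes F: "\<forall>s. \<forall>A\<in>F. \<sigma> s \<inter> A \<noteq> {}"
  shows "\<exists>\<tau>. (\<forall>s. s \<noteq> [] \<and> set s \<subseteq> F \<longrightarrow> \<tau> s \<in> last s) \<and>
     (\<forall>E. (\<forall>n. E n \<in> F) \<longrightarrow>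
        (\<forall>n. \<tau> (map E [0..<Suc n]) \<in> \<sigma> (map (\<lambda>n. \<tau> (map E [0..<Suc n])) [0..<n])))"
proof -
  define \<tau> where "\<tau> s = last (hr \<sigma> (rev s))" for s
  have step: "\<tau> (s @ [A]) = (SOME x. x \<in> \<sigma> (hr \<sigma> (rev s)) \<inter> A)" for s A
    by (simp add: \<tau>_def)
  have pick: "(SOME x. x \<in> \<sigma> p \<inter> A) \<in> \<sigma> p \<inter> A" if "A \<in> F" for p A
  proof -
    from F that obtain x where "x \<in> \<sigma> p \<inter> A" by blast
    then show ?thesis by (rule someI)
  qed
  have 1: "\<forall>s. s \<noteq> [] \<and> set s \<subseteq> F \<longrightarrow> \<tau> s \<in> last s"
  proof (intro allI impI)
    fix s :: "'a set list" assume s: "s \<noteq> [] \<and> set s \<subseteq> F"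
    then obtain s' A where "s = s' @ [A]" by (cases s rule: rev_cases) auto
    with s show "\<tau> s \<in> last s" using step pick by auto
  qed
  have 2: "\<forall>n. \<tau> (map E [0..<Suc n]) \<in> \<sigma> (map (\<lambda>n. \<tau> (map E [0..<Suc n])) [0..<n])"
    if E: "\<forall>n. E n \<in> F" for E
  proof -
    have h: "hr \<sigma> (rev (map E [0..<n])) = map (\<lambda>n. \<tau> (map E [0..<Suc n])) [0..<n]" for n
    proof (induction n)
      case 0 then show ?case by simp
    next
      case (Suc n)
      then show ?case by (simp add: step)
    qed
    show ?thesis
    proof
      fix n
      have "\<tau> (map E [0..<Suc n]) = (SOME x. x \<in> \<sigma> (hr \<sigma> (rev (map E [0..<n]))) \<inter> E n)"
        by (simp add: step)
      then show "\<tau> (map E [0..<Suc n]) \<in> \<sigma> (map (\<lambda>n. \<tau> (map E [0..<Suc n])) [0..<n])"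
        using pick[OF E[rule_format, of n]] h by auto
    qed
  qed
  show ?thesis using 1 2 by blast
qed

primrec hb :: "('c set list \<Rightarrow> 'c) \<Rightarrow> 'c set set \<Rightarrow> 'c list \<Rightarrow> 'c set list" where
  "hb \<tau> F [] = []"
| "hb \<tau> F (x#r) = hb \<tau> F r @ [SOME A. A \<in> F \<and> (\<tau> (hb \<tau> F r @ [A]) = x \<or> \<not>(\<exists>B\<in>F. \<tau> (hb \<tau> F r @ [B]) = x))]"

lemma rebuild:
  assumes Fne: "F \<noteq> {}"
  shows "\<exists>hist :: 'c list \<Rightarrow> 'c set list. (\<forall>xs. set (hist xs) \<subseteq> F) \<and>
    (\<forall>x::nat \<Rightarrow> 'c. (\<forall>n. \<exists>A\<in>F. \<tau> (hist (map x [0..<n]) @ [A]) = x n) \<longrightarrow>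
       (\<exists>E. (\<forall>n. E n \<in> F) \<and> (\<forall>n. \<tau> (map E [0..<Suc n]) = x n)))"
proof -
  define hist where "hist xs = hb \<tau> F (rev xs)" for xs
  have ex: "\<exists>A. A \<in> F \<and> (\<tau> (p @ [A]) = x \<or> \<not>(\<exists>B\<in>F. \<tau> (p @ [B]) = x))" for p x
    using Fne by blast
  have stp: "hist (xs @ [x]) = hist xs @ [SOME A. A \<in> F \<and> (\<tau> (hist xs @ [A]) = x \<or> \<not>(\<exists>B\<in>F. \<tau> (hist xs @ [B]) = x))]" for xs x
    by (simp add: hist_def)
  have sub: "set (hb \<tau> F r) \<subseteq> F" for r
  proof (induction r)
    case Nil then show ?case by simp
  next
    case (Cons a r)
    then show ?case using someI_ex[OF ex] by simp
  qed
  have 1: "\<forall>xs. set (hist xs) \<subseteq> F" using sub hist_def by simp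
  have 2: "\<exists>E. (\<forall>n. E n \<in> F) \<and> (\<forall>n. \<tau> (map E [0..<Suc n]) = x n)"
    if x: "\<forall>n. \<exists>A\<in>F. \<tau> (hist (map x [0..<n]) @ [A]) = x n" for x :: "nat \<Rightarrow> 'c"
  proof -
    define E where "E n = last (hist (map x [0..<Suc n]))" for n
    have h: "hist (map x [0..<n]) = map E [0..<n]" for n
    proof (induction n)
      case 0 then show ?case by (simp add: hist_def)
    next
      case (Suc n)
      then show ?case by (simp add: stp E_def)
    qed
    have EF: "E n \<in> F" for n
    proof -
      have "E n \<in> set (hist (map x [0..<Suc n]))" by (simp add: E_def stp)
      then show ?thesis using 1 by blast
    qed
    have "\<tau> (map E [0..<Suc n]) = x n" for n
    proof -
      let ?P = "\<lambda>A. A \<in> F \<and> (\<tau> (hist (map x [0..<n]) @ [A]) = x n \<or> \<not>(\<exists>B\<in>F. \<tau> (hist (map x [0..<n]) @ [B]) = x n))"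
      have "E n = (SOME A. ?P A)" by (simp add: E_def stp)
      moreover have "?P (SOME A. ?P A)" using someI_ex[OF ex] .
      ultimately have "\<tau> (hist (map x [0..<n]) @ [E n]) = x n" using x by auto
      then show ?thesis using h by simp
    qed
    then show ?thesis using EF by blast
  qed
  show ?thesis using 1 2 by blast
qed

lemma dual_abstract:
  assumes y: "y \<in> topspace Y"
  shows "dual_games (Omega Y y, C) (Nbhds Y y, - C)"
proof -
  let ?O = "Omega Y y" and ?N = "Nbhds Y y"
  have ON: "S \<inter> U \<noteq> {}" if o: "S \<in> ?O" and u: "U \<in> ?N" for S U
  proof -
    have "\<forall>U\<in>?N. S \<inter> U \<noteq> {}" using o unfolding omega_iff by (elim conjE)
    then show ?thesis using u by (rule bspec)
  qed
  have A: "two_has_ws (?N, -C)" if h: "one_has_ws (?O, C)"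
  proof -
    obtain \<sigma> where s1: "\<forall>s. \<sigma> s \<in> ?O"
      and s2: "\<forall>x. (\<forall>n. x n \<in> \<sigma> (map x [0..<n])) \<longrightarrow> range x \<notin> C"
      using h unfolding one_has_ws_def one_wins_def by auto
    have "\<forall>s. \<forall>A\<in>?N. \<sigma> s \<inter> A \<noteq> {}" using s1 ON by blast
    from follow[OF this] obtain \<tau> where
      t1: "\<forall>s. s \<noteq> [] \<and> set s \<subseteq> ?N \<longrightarrow> \<tau> s \<in> last s" and
      t2: "\<forall>E. (\<forall>n. E n \<in> ?N) \<longrightarrow>
        (\<forall>n. \<tau> (map E [0..<Suc n]) \<in> \<sigma> (map (\<lambda>n. \<tau> (map E [0..<Suc n])) [0..<n]))"
      by blast
    have "two_wins (?N, -C) \<tau>"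
      unfolding two_wins_def using t1 t2 s2 by simp
    then show ?thesis unfolding two_has_ws_def by blast
  qed
  have C: "two_has_ws (?O, C)" if h: "one_has_ws (?N, -C)"
  proof -
    obtain \<sigma> where s1: "\<forall>s. \<sigma> s \<in> ?N"
      and s2: "\<forall>x. (\<forall>n. x n \<in> \<sigma> (map x [0..<n])) \<longrightarrow> range x \<notin> -C"
      using h unfolding one_has_ws_def one_wins_def by auto
    have "\<forall>s. \<forall>A\<in>?O. \<sigma> s \<inter> A \<noteq> {}" using s1 ON by blast
    from follow[OF this] obtain \<tau> where
      t1: "\<forall>s. s \<noteq> [] \<and> set s \<subseteq> ?O \<longrightarrow> \<tau> s \<in> last s" and
      t2: "\<forall>E. (\<forall>n. E n \<in> ?O) \<longrightarrow>
        (\<forall>n. \<tau> (map E [0..<Suc n]) \<in> \<sigma> (map (\<lambda>n. \<tau> (map E [0..<Suc n])) [0..<n]))"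
      by blast
    have "two_wins (?O, C) \<tau>"
      unfolding two_wins_def using t1 t2 s2 by simp
    then show ?thesis unfolding two_has_ws_def by blast
  qed
  have B: "one_has_ws (?O, C)" if h: "two_has_ws (?N, -C)"
  proof -
    obtain \<tau> where t1: "\<forall>s. s \<noteq> [] \<and> set s \<subseteq> ?N \<longrightarrow> \<tau> s \<in> last s"
      and t2: "\<forall>E. (\<forall>n. E n \<in> ?N) \<longrightarrow> range (\<lambda>n. \<tau> (map E [0..<Suc n])) \<in> -C"
      using h unfolding two_has_ws_def two_wins_def by auto
    have "?N \<noteq> {}" using top_nbhd[OF y] by blast
    from rebuild[OF this, of \<tau>] obtain hist where
      h1: "\<forall>xs. set (hist xs) \<subseteq> ?N" and
      h2: "\<forall>x. (\<forall>n. \<exists>A\<in>?N. \<tau> (hist (map x [0..<n]) @ [A]) = x n) \<longrightarrow>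
       (\<exists>E. (\<forall>n. E n \<in> ?N) \<and> (\<forall>n. \<tau> (map E [0..<Suc n]) = x n))" by blast
    define \<sigma> where "\<sigma> xs = (\<lambda>U. \<tau> (hist xs @ [U])) ` ?N" for xs
    have "\<sigma> xs \<in> ?O" for xs
      unfolding \<sigma>_def
    proof (rule small_omega[OF y], intro ballI)
      fix U assume "U \<in> ?N"
      then show "\<tau> (hist xs @ [U]) \<in> U" using t1[rule_format, of "hist xs @ [U]"] h1[rule_format, of xs] by simp
    qed
    moreover have "range x \<notin> C" if x: "\<forall>n. x n \<in> \<sigma> (map x [0..<n])" for x
    proof -
      have "\<forall>n. \<exists>A\<in>?N. \<tau> (hist (map x [0..<n]) @ [A]) = x n"
      proof
        fix n
        have "x n \<in> (\<lambda>U. \<tau> (hist (map x [0..<n]) @ [U])) ` ?N" using x unfolding \<sigma>_def by simp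
        then obtain A where "A \<in> ?N" "x n = \<tau> (hist (map x [0..<n]) @ [A])" by (rule imageE)
        then show "\<exists>A\<in>?N. \<tau> (hist (map x [0..<n]) @ [A]) = x n" by auto
      qed
      then obtain E where "\<forall>n. E n \<in> ?N" "\<forall>n. \<tau> (map E [0..<Suc n]) = x n"
        using h2 by blast
      moreover have "(\<lambda>n. \<tau> (map E [0..<Suc n])) = x" using calculation(2) by (intro ext) simp
      ultimately show ?thesis using t2 by force
    qed
    ultimately have "one_wins (?O, C) \<sigma>" unfolding one_wins_def by simp
    then show ?thesis unfolding one_has_ws_def by blast
  qed
  have D: "one_has_ws (?N, -C)" if h: "two_has_ws (?O, C)"
  proof -
    obtain \<tau> where t1: "\<forall>s. s \<noteq> [] \<and> set s \<subseteq> ?O \<longrightarrow> \<tau> s \<in> last s"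
      and t2: "\<forall>E. (\<forall>n. E n \<in> ?O) \<longrightarrow> range (\<lambda>n. \<tau> (map E [0..<Suc n])) \<in> C"
      using h unfolding two_has_ws_def two_wins_def by auto
    have "?O \<noteq> {}" using top_omega[OF y] by blast
    from rebuild[OF this, of \<tau>] obtain hist where
      h1: "\<forall>xs. set (hist xs) \<subseteq> ?O" and
      h2: "\<forall>x. (\<forall>n. \<exists>A\<in>?O. \<tau> (hist (map x [0..<n]) @ [A]) = x n) \<longrightarrow>
       (\<exists>E. (\<forall>n. E n \<in> ?O) \<and> (\<forall>n. \<tau> (map E [0..<Suc n]) = x n))" by blast
    define P where "P s = (SOME U. U \<in> ?N \<and> (\<forall>x\<in>U. \<exists>A\<in>?O. \<tau> (s @ [A]) = x))" for s
    have P: "P (hist xs) \<in> ?N \<and> (\<forall>x\<in>P (hist xs). \<exists>A\<in>?O. \<tau> (hist xs @ [A]) = x)" for xs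
    proof -
      have "\<forall>A\<in>?O. \<tau> (hist xs @ [A]) \<in> A"
      proof
        fix A assume "A \<in> ?O"
        then show "\<tau> (hist xs @ [A]) \<in> A" using t1[rule_format, of "hist xs @ [A]"] h1[rule_format, of xs] by simp
      qed
      from big_nbhd[OF y this] show ?thesis unfolding P_def by (rule someI2_bex) blast
    qed
    define \<sigma> where "\<sigma> xs = P (hist xs)" for xs
    have "\<sigma> xs \<in> ?N" for xs using P[of xs] unfolding \<sigma>_def by (elim conjE)
    moreover have "range x \<notin> -C" if x: "\<forall>n. x n \<in> \<sigma> (map x [0..<n])" for x
    proof -
      have "\<forall>n. \<exists>A\<in>?O. \<tau> (hist (map x [0..<n]) @ [A]) = x n"
      proof
        fix n
        have "x n \<in> P (hist (map x [0..<n]))" using x unfolding \<sigma>_def by simp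
        then show "\<exists>A\<in>?O. \<tau> (hist (map x [0..<n]) @ [A]) = x n"
          using P[of "map x [0..<n]"] by (elim conjE) (rule bspec)
      qed
      then obtain E where "\<forall>n. E n \<in> ?O" "\<forall>n. \<tau> (map E [0..<Suc n]) = x n"
        using h2 by blast
      moreover have "(\<lambda>n. \<tau> (map E [0..<Suc n])) = x" using calculation(2) by (intro ext) simp
      ultimately show ?thesis using t2 by force
    qed
    ultimately have "one_wins (?N, -C) \<sigma>" unfolding one_wins_def by simp
    then show ?thesis unfolding one_has_ws_def by blast
  qed
  have E: "two_has_ws_markov (?N, -C)" if h: "one_has_ws_pre (?O, C)"
  proof -
    obtain E where e1: "\<forall>n::nat. E n \<in> ?O" and e2: "\<forall>x. (\<forall>n. x n \<in> E n) \<longrightarrow> range x \<notin> C"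
      using h unfolding one_has_ws_pre_def by auto
    define \<tau> where "\<tau> n U = (SOME x. x \<in> E n \<inter> U)" for n U
    have t: "\<tau> n U \<in> E n \<inter> U" if "U \<in> ?N" for n U
    proof -
      from ON[OF _ that] e1 obtain z where "z \<in> E n \<inter> U" by blast
      then show ?thesis unfolding \<tau>_def by (rule someI)
    qed
    have "\<forall>U. (\<forall>n::nat. U n \<in> ?N) \<longrightarrow> range (\<lambda>n. \<tau> n (U n)) \<in> -C"
    proof (intro allI impI)
      fix U :: "nat \<Rightarrow> _" assume "\<forall>n. U n \<in> ?N"
      then have "\<forall>n. \<tau> n (U n) \<in> E n" using t by blast
      then show "range (\<lambda>n. \<tau> n (U n)) \<in> -C" using e2[rule_format, of "\<lambda>n. \<tau> n (U n)"] by simp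
    qed
    then show ?thesis unfolding two_has_ws_markov_def using t by auto
  qed
  have F: "one_has_ws_pre (?O, C)" if h: "two_has_ws_markov (?N, -C)"
  proof -
    obtain \<tau> where t1: "\<forall>(n::nat) U. U \<in> ?N \<longrightarrow> \<tau> n U \<in> U"
      and t2: "\<forall>U. (\<forall>n. U n \<in> ?N) \<longrightarrow> range (\<lambda>n. \<tau> n (U n)) \<in> -C"
      using h unfolding two_has_ws_markov_def by auto
    define E where "E n = \<tau> n ` ?N" for n
    have "E n \<in> ?O" for n unfolding E_def using small_omega[OF y] t1 by blast
    moreover have "range x \<notin> C" if x: "\<forall>n. x n \<in> E n" for x
    proof -
      have "\<forall>n. \<exists>U. U \<in> ?N \<and> \<tau> n U = x n"
      proof
        fix n
        have "x n \<in> \<tau> n ` ?N" using x unfolding E_def by simp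
        then obtain A where "A \<in> ?N" "x n = \<tau> n A" by (rule imageE)
        then show "\<exists>U. U \<in> ?N \<and> \<tau> n U = x n" by auto
      qed
      then obtain U where U: "\<forall>n. U n \<in> ?N \<and> \<tau> n (U n) = x n" using choice[of "\<lambda>n U. U \<in> ?N \<and> \<tau> n U = x n"] by blast
      then have "(\<lambda>n. \<tau> n (U n)) = x" by (intro ext) simp
      then show ?thesis using t2 U by force
    qed
    ultimately show ?thesis unfolding one_has_ws_pre_def by auto
  qed
  have G: "two_has_ws_markov (?O, C)" if h: "one_has_ws_pre (?N, -C)"
  proof -
    obtain E where e1: "\<forall>n::nat. E n \<in> ?N" and e2: "\<forall>x. (\<forall>n. x n \<in> E n) \<longrightarrow> range x \<notin> -C"
      using h unfolding one_has_ws_pre_def by auto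
    define \<tau> where "\<tau> n U = (SOME x. x \<in> E n \<inter> U)" for n U
    have t: "\<tau> n U \<in> E n \<inter> U" if "U \<in> ?O" for n U
    proof -
      from ON[OF that] e1 obtain z where "z \<in> E n \<inter> U" by blast
      then show ?thesis unfolding \<tau>_def by (rule someI)
    qed
    have "\<forall>U. (\<forall>n::nat. U n \<in> ?O) \<longrightarrow> range (\<lambda>n. \<tau> n (U n)) \<in> C"
    proof (intro allI impI)
      fix U :: "nat \<Rightarrow> _" assume "\<forall>n. U n \<in> ?O"
      then have "\<forall>n. \<tau> n (U n) \<in> E n" using t by blast
      then show "range (\<lambda>n. \<tau> n (U n)) \<in> C" using e2[rule_format, of "\<lambda>n. \<tau> n (U n)"] by simp
    qed
    then show ?thesis unfolding two_has_ws_markov_def using t by auto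
  qed
  have H: "one_has_ws_pre (?N, -C)" if h: "two_has_ws_markov (?O, C)"
  proof -
    obtain \<tau> where t1: "\<forall>(n::nat) U. U \<in> ?O \<longrightarrow> \<tau> n U \<in> U"
      and t2: "\<forall>U. (\<forall>n. U n \<in> ?O) \<longrightarrow> range (\<lambda>n. \<tau> n (U n)) \<in> C"
      using h unfolding two_has_ws_markov_def by auto
    define E where "E (n::nat) = (SOME U. U \<in> ?N \<and> (\<forall>x\<in>U. \<exists>A\<in>?O. \<tau> n A = x))" for n
    have Ep: "E n \<in> ?N \<and> (\<forall>x\<in>E n. \<exists>A\<in>?O. \<tau> n A = x)" for n
    proof -
      have "\<forall>A\<in>?O. \<tau> n A \<in> A" using t1 by auto
      from big_nbhd[OF y this] show ?thesis unfolding E_def by (rule someI2_bex) blast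
    qed
    moreover have "range x \<notin> -C" if x: "\<forall>n. x n \<in> E n" for x
    proof -
      have "\<forall>n. \<exists>A. A \<in> ?O \<and> \<tau> n A = x n" using x Ep by blast
      then obtain U where U: "\<forall>n. U n \<in> ?O \<and> \<tau> n (U n) = x n" using choice[of "\<lambda>n U. U \<in> ?O \<and> \<tau> n U = x n"] by blast
      then have "(\<lambda>n. \<tau> n (U n)) = x" by (intro ext) simp
      then show ?thesis using t2 U by force
    qed
    ultimately show ?thesis unfolding one_has_ws_pre_def by auto
  qed
  show ?thesis unfolding dual_games_def using A B C D E F G H by blast
qed

lemma zero_top: "(\<lambda>_. 0) \<in> topspace (C_top X \<A>)"
  unfolding C_top_def Cfun_def by simp

theorem mainTheorem5:
  fixes X :: "'x topology" and \<A> \<B> :: "'x set set"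
  assumes "\<A> \<subseteq> Pow (topspace X)" and "\<B> \<subseteq> Pow (topspace X)"
  shows "dual_games
           (Omega (C_top X \<A>) (\<lambda>_. 0), Omega (C_top X \<B>) (\<lambda>_. 0))
           (Nbhds (C_top X \<A>) (\<lambda>_. 0), - Omega (C_top X \<B>) (\<lambda>_. 0))"
  by (rule dual_abstract[OF zero_top])

end
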